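(* Let $\{1,\mu_1,\mu_2,\mu_3\}$ be a quaternion basis ($\mu_1,\mu_2$ orthogonal pure unit quaternions, $\mu_3=\mu_1\mu_2$), and let $q=z_1+z_2\mu_2$ with $z_1,z_2$ random variables in $\mathbb{C}_{\mu_1}$ be a centered quaternion Gaussian random variable which is $(1,\mu_1)$-proper, i.e. $q\stackrel{d}{=}q\mu_1$. Let ${\bf q}_{\mathbb{C}}=[z_1,z_1^{\star},z_2,z_2^{\star}]^T$. Then $$\mathbb{E}[{\bf q}_{\mathbb{C}}{\bf q}_{\mathbb{C}}^{\dagger}]=\begin{bmatrix}\sigma^2 & 0 & 0 & \omega\\ 0 & \sigma^2 & \omega^{\star} & 0\\ 0 & \omega & \varsigma^2 & 0\\ \omega^{\star} & 0 & 0 & \varsigma^2\end{bmatrix},$$ where $\sigma^2=\mathbb{E}[|z_1|^2]\in\mathbb{R}$, $\varsigma^2=\mathbb{E}[|z_2|^2]\in\mathbb{R}$ and $\omega=\mathbb{E}[z_1z_2]\in\mathbb{C}_{\mu_1}$.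
   Context: $\mathbb{H}$ denotes the quaternions; $\mathbb{C}_{\mu_1}=\mathbb{R}\oplus\mu_1\mathbb{R}$ is the commutative subfield isomorphic to $\mathbb{C}$; $^{\star}$ denotes conjugation and $\dagger$ conjugate transpose. A quaternion Gaussian random variable is one whose four real components are jointly Gaussian; centered means $\mathbb{E}[q]=0$. $\stackrel{d}{=}$ denotes equality in distribution. *)

theory Defs
  imports "HOL-Probability.Probability"
begin

text \<open>Quaternions are modelled as real^4 with components (re, i, j, k) = ($1,$2,$3,$4);
  the Euclidean norm / inner product of real^4 are the quaternion modulus / inner product.\<close>

type_synonym quat = "real ^ 4"

definition quat :: "real \<Rightarrow> real \<Rightarrow> real \<Rightarrow> real \<Rightarrow> quat" where
  "quat a b c d = vector [a, b, c, d]"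

definition qre :: "quat \<Rightarrow> real" where "qre p = p $ 1"
definition qi :: "quat \<Rightarrow> real" where "qi p = p $ 2"
definition qj :: "quat \<Rightarrow> real" where "qj p = p $ 3"
definition qk :: "quat \<Rightarrow> real" where "qk p = p $ 4"

definition qone :: quat where "qone = quat 1 0 0 0"

definition qmul :: "quat \<Rightarrow> quat \<Rightarrow> quat" where
  "qmul p q = quat
     (qre p * qre q - qi p * qi q - qj p * qj q - qk p * qk q)
     (qre p * qi q + qi p * qre q + qj p * qk q - qk p * qj q)
     (qre p * qj q - qi p * qk q + qj p * qre q + qk p * qi q)
     (qre p * qk q + qi p * qj q - qj p * qi q + qk p * qre q)"

definition qcnj :: "quat \<Rightarrow> quat" where
  "qcnj p = quat (qre p) (- qi p) (- qj p) (- qk p)"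

definition pure_unit :: "quat \<Rightarrow> bool" where
  "pure_unit \<mu> \<longleftrightarrow> qre \<mu> = 0 \<and> norm \<mu> = 1"

definition Cmu :: "quat \<Rightarrow> quat set" where
  "Cmu \<mu> = {a *\<^sub>R qone + b *\<^sub>R \<mu> | a b. True}"

text \<open>Real Gaussian random variable (degenerate/constant laws allowed).\<close>
definition real_gaussian :: "'a measure \<Rightarrow> ('a \<Rightarrow> real) \<Rightarrow> bool" where
  "real_gaussian M X \<longleftrightarrow> X \<in> borel_measurable M \<and>
     ((\<exists>c. distr M borel X = return borel c) \<or>
      (\<exists>m s. s > 0 \<and> distributed M lborel X (normal_density m s)))"

text \<open>Quaternion Gaussian: the four real components are jointly Gaussian, i.e.
  every real linear combination of them is a real Gaussian random variable.\<close>
definition quat_gaussian :: "'a measure \<Rightarrow> ('a \<Rightarrow> quat) \<Rightarrow> bool" where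
  "quat_gaussian M q \<longleftrightarrow> q \<in> borel_measurable M \<and>
     (\<forall>a::real^4. real_gaussian M (\<lambda>x. a \<bullet> q x))"

end

theory Submission imports Defs begin
lemma vec4[simp]: "(vector [a,b,c,d] :: ('a::zero)^4) $ 1 = a" "(vector [a,b,c,d] :: ('a::zero)^4) $ 2 = b"
 "(vector [a,b,c,d] :: ('a::zero)^4) $ 3 = c" "(vector [a,b,c,d] :: ('a::zero)^4) $ 4 = d"
  by (simp_all add: vector_def)
lemma quat_nth[simp]: "quat a b c d $ 1 = a" "quat a b c d $ 2 = b" "quat a b c d $ 3 = c" "quat a b c d $ 4 = d"
  by (simp_all add: quat_def)
lemma quat_eq_iff: "(p::quat) = r \<longleftrightarrow> p$1 = r$1 \<and> p$2 = r$2 \<and> p$3 = r$3 \<and> p$4 = r$4"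
  by (simp add: vec_eq_iff forall_4)
lemma inner4: "(p::quat) \<bullet> r = p$1*r$1 + p$2*r$2+p$3*r$3+p$4*r$4"
  unfolding inner_vec_def sum_4 by simp
lemma pure_unitD: assumes "pure_unit \<mu>" shows "\<mu>$1 = 0" "\<mu>$2*\<mu>$2+\<mu>$3*\<mu>$3+\<mu>$4*\<mu>$4 = 1"
proof -
  show "\<mu>$1 = 0" using assms by (simp add: pure_unit_def qre_def)
  have "\<mu> \<bullet> \<mu> = 1" using assms by (simp add: pure_unit_def power2_norm_eq_inner[symmetric])
  then show "\<mu>$2*\<mu>$2+\<mu>$3*\<mu>$3+\<mu>$4*\<mu>$4 = 1" using \<open>\<mu>$1 = 0\<close> by (simp add: inner4)
qed
lemma aux_sq: assumes "x2*x2+x3*x3+x4*x4 = (1::real)"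
  shows "b * d = b * (d * (x2 * x2)) + (b * (d * (x3 * x3)) + b * (d * (x4 * x4)))"
proof -
  have "b * (d * (x2 * x2)) + (b * (d * (x3 * x3)) + b * (d * (x4 * x4))) = b*d*(x2*x2+x3*x3+x4*x4)"
    by (simp add: algebra_simps)
  then show ?thesis using assms by simp
qed
definition cm :: "quat \<Rightarrow> real \<Rightarrow> real \<Rightarrow> quat" where "cm \<mu> a b = a *\<^sub>R qone + b *\<^sub>R \<mu>"
lemma cm_nth: "pure_unit \<mu> \<Longrightarrow> cm \<mu> a b $ 1 = a \<and> cm \<mu> a b $ 2 = b * \<mu>$2 \<and> cm \<mu> a b $ 3 = b * \<mu>$3 \<and> cm \<mu> a b $ 4 = b * \<mu>$4"
  by (simp add: cm_def qone_def pure_unitD)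
lemma qmul_cm: assumes "pure_unit \<mu>" shows "qmul (cm \<mu> a b) (cm \<mu> c d) = cm \<mu> (a*c - b*d) (a*d+b*c)"
proof -
  note h = pure_unitD[OF assms]
  have e: "b*d = b*d*(\<mu>$2*\<mu>$2+\<mu>$3*\<mu>$3+\<mu>$4*\<mu>$4)" by (simp add: h)
  show ?thesis unfolding quat_eq_iff qmul_def qre_def qi_def qj_def qk_def using cm_nth[OF assms] h
    apply (simp add: algebra_simps)
    by (rule aux_sq[OF h(2)])
qed
lemma qcnj_cm: assumes "pure_unit \<mu>" shows "qcnj (cm \<mu> a b) = cm \<mu> a (-b)"
  unfolding quat_eq_iff qcnj_def qre_def qi_def qj_def qk_def using cm_nth[OF assms] by simp
lemma norm_cm: assumes "pure_unit \<mu>" shows "(norm (cm \<mu> a b))^2 = a^2 + b^2"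
proof -
  note h = pure_unitD[OF assms]
  have e: "b*b = b*b*(\<mu>$2*\<mu>$2+\<mu>$3*\<mu>$3+\<mu>$4*\<mu>$4)" by (simp add: h)
  show ?thesis unfolding power2_norm_eq_inner inner4 using cm_nth[OF assms] h
    apply (simp add: algebra_simps power2_eq_square)
    by (rule aux_sq[OF h(2), symmetric])
qed
lemma norm_cm2: assumes "pure_unit \<mu>" shows "norm (cm \<mu> a b) * norm (cm \<mu> a b) = a*a + b*b"
  using norm_cm[OF assms, of a b] by (simp add: power2_eq_square)
lemma qmul_add_left: "qmul (u + v) w = qmul u w + qmul v w"
  unfolding quat_eq_iff qmul_def qre_def qi_def qj_def qk_def by (simp add: algebra_simps)
lemma qmul_scaleR_left: "qmul (s *\<^sub>R u) w = s *\<^sub>R qmul u w"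
  unfolding quat_eq_iff qmul_def qre_def qi_def qj_def qk_def by (simp add: algebra_simps)
lemma qmul_one_left: "qmul qone w = w"
  unfolding quat_eq_iff qmul_def qre_def qi_def qj_def qk_def qone_def by simp
lemma qone_nth: "qone$1 = 1" "qone$2 = 0" "qone$3 = 0" "qone$4 = 0" by (simp_all add: qone_def)

locale qbasis =
  fixes m1 m2 :: quat
  assumes pu1: "pure_unit m1" and pu2: "pure_unit m2" and orth: "m1 \<bullet> m2 = 0"
begin
abbreviation "m3 \<equiv> qmul m1 m2"
lemma m1: "m1$1 = 0" "m1$2*m1$2+m1$3*m1$3+m1$4*m1$4 = 1" using pure_unitD[OF pu1] .
lemma m2: "m2$1 = 0" "m2$2*m2$2+m2$3*m2$3+m2$4*m2$4 = 1" using pure_unitD[OF pu2] .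
lemma o12: "m1$2*m2$2+m1$3*m2$3+m1$4*m2$4 = 0" using orth m1 by (simp add: inner4)
lemma m3_nth: "m3$1 = 0" "m3$2 = m1$3*m2$4 - m1$4*m2$3" "m3$3 = m1$4*m2$2 - m1$2*m2$4" "m3$4 = m1$2*m2$3 - m1$3*m2$2"
  unfolding qmul_def qre_def qi_def qj_def qk_def using m1 m2 o12 by (simp_all add: algebra_simps)
lemma pmul: assumes "p$1 = 0" "r$1 = 0"
  shows "qmul p r = quat (-(p$2*r$2+p$3*r$3+p$4*r$4)) (p$3*r$4 - p$4*r$3) (p$4*r$2 - p$2*r$4) (p$2*r$3 - p$3*r$2)"
  unfolding quat_eq_iff qmul_def qre_def qi_def qj_def qk_def using assms by simp
lemma trip1: "m1 \<bullet> m3 = 0"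
proof -
  have "m1 \<bullet> m3 = m1$2*(m1$3*m2$4 - m1$4*m2$3) + m1$3*(m1$4*m2$2 - m1$2*m2$4) + m1$4*(m1$2*m2$3 - m1$3*m2$2)"
    unfolding inner4 m3_nth m1 by simp
  also have "\<dots> = 0" by (simp add: algebra_simps)
  finally show ?thesis .
qed
lemma trip2: "m2 \<bullet> m3 = 0"
proof -
  have "m2 \<bullet> m3 = m2$2*(m1$3*m2$4 - m1$4*m2$3) + m2$3*(m1$4*m2$2 - m1$2*m2$4) + m2$4*(m1$2*m2$3 - m1$3*m2$2)"
    unfolding inner4 m3_nth m2 by simp
  also have "\<dots> = 0" by (simp add: algebra_simps)
  finally show ?thesis .
qed
lemma m3m3: "m3 \<bullet> m3 = 1"
proof -
  have "m3 \<bullet> m3 = (m1$3*m2$4 - m1$4*m2$3)*(m1$3*m2$4 - m1$4*m2$3) + (m1$4*m2$2 - m1$2*m2$4)*(m1$4*m2$2 - m1$2*m2$4) + (m1$2*m2$3 - m1$3*m2$2)*(m1$2*m2$3 - m1$3*m2$2)"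
    unfolding inner4 m3_nth by simp
  also have "\<dots> = (m1$2*m1$2+m1$3*m1$3+m1$4*m1$4)*(m2$2*m2$2+m2$3*m2$3+m2$4*m2$4) - (m1$2*m2$2+m1$3*m2$3+m1$4*m2$4)*(m1$2*m2$2+m1$3*m2$3+m1$4*m2$4)"
    by (simp add: algebra_simps)
  also have "\<dots> = 1" unfolding m1(2) m2(2) o12 by simp
  finally show ?thesis .
qed
lemma inners: "qone \<bullet> qone = 1" "qone \<bullet> m1 = 0" "qone \<bullet> m2 = 0" "qone \<bullet> m3 = 0"
  "m1 \<bullet> m1 = 1" "m1 \<bullet> m2 = 0" "m1 \<bullet> m3 = 0" "m2 \<bullet> m2 = 1" "m2 \<bullet> m3 = 0" "m3 \<bullet> m3 = 1"
  using trip1 trip2 m3m3 orth m1 m2 unfolding inner4 qone_nth m3_nth by simp_all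
lemma prod11: "qmul m1 m1 = (-1) *\<^sub>R qone"
  unfolding pmul[OF m1(1) m1(1)] m1(2) quat_eq_iff by (simp add: qone_nth mult.commute)
lemma prod21: "qmul m2 m1 = (-1) *\<^sub>R m3"
proof -
  have o21: "m2$2*m1$2+m2$3*m1$3+m2$4*m1$4 = 0" using o12 by (simp add: mult.commute)
  show ?thesis unfolding pmul[OF m2(1) m1(1)] o21 quat_eq_iff by (simp add: algebra_simps m3_nth)
qed
lemma prod31: "qmul m3 m1 = m2"
proof -
  have e1: "m3$2*m1$2+m3$3*m1$3+m3$4*m1$4 = 0" using trip1 unfolding inner4 m1 m3_nth by (simp add: mult.commute)
  have e2: "m3$3*m1$4 - m3$4*m1$3 = m2$2*(m1$2*m1$2+m1$3*m1$3+m1$4*m1$4) - m1$2*(m1$2*m2$2+m1$3*m2$3+m1$4*m2$4)"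
    unfolding m3_nth by (simp add: algebra_simps)
  have e3: "m3$4*m1$2 - m3$2*m1$4 = m2$3*(m1$2*m1$2+m1$3*m1$3+m1$4*m1$4) - m1$3*(m1$2*m2$2+m1$3*m2$3+m1$4*m2$4)"
    unfolding m3_nth by (simp add: algebra_simps)
  have e4: "m3$2*m1$3 - m3$3*m1$2 = m2$4*(m1$2*m1$2+m1$3*m1$3+m1$4*m1$4) - m1$4*(m1$2*m2$2+m1$3*m2$3+m1$4*m2$4)"
    unfolding m3_nth by (simp add: algebra_simps)
  show ?thesis unfolding pmul[OF m3_nth(1) m1(1)] quat_eq_iff e1 e2 e3 e4 m1(2) o12 using m2(1) by simp
qed
lemmas prods = prod11 prod21 prod31
definition Bq :: "real \<Rightarrow> real \<Rightarrow> real \<Rightarrow> real \<Rightarrow> quat" where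
  "Bq a b c d = a *\<^sub>R qone + b *\<^sub>R m1 + c *\<^sub>R m2 + d *\<^sub>R m3"
lemma qmul_Bq: "qmul (Bq a b c d) m1 = Bq (-b) a d (-c)"
  unfolding Bq_def qmul_add_left qmul_scaleR_left prods qmul_one_left by (simp add: algebra_simps)
lemma inner_Bq: "qone \<bullet> Bq a b c d = a" "m1 \<bullet> Bq a b c d = b" "m2 \<bullet> Bq a b c d = c" "m3 \<bullet> Bq a b c d = d"
  unfolding Bq_def by (simp_all add: inner_add_right inners inner_commute[of m1 qone] inner_commute[of m2 qone]
     inner_commute[of m3 qone] inner_commute[of m2 m1] inner_commute[of m3 m1] inner_commute[of m3 m2])
lemma Cmu_cm: "z \<in> Cmu m1 \<Longrightarrow> z = cm m1 (z \<bullet> qone) (z \<bullet> m1)"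
  unfolding Cmu_def cm_def by (auto simp: inner_add_left inners inner_commute[of m1 qone])
lemma qmul_cm_m2: "qmul (cm m1 c d) m2 = c *\<^sub>R m2 + d *\<^sub>R m3"
  unfolding cm_def qmul_add_left qmul_scaleR_left qmul_one_left ..
lemma cm_Bq: "cm m1 a b + (c *\<^sub>R m2 + d *\<^sub>R m3) = Bq a b c d"
  unfolding cm_def Bq_def by (simp add: algebra_simps)
end

lemma gaussian_sq_integrable:
  assumes P: "prob_space M" and G: "real_gaussian M X"
  shows "integrable M (\<lambda>x. (X x)^2)"
proof -
  have Xm[measurable]: "X \<in> borel_measurable M" using G by (simp add: real_gaussian_def)
  from G consider (c) c where "distr M borel X = return borel c"
    | (n) m s where "s > 0" "distributed M lborel X (normal_density m s)"
    unfolding real_gaussian_def by blast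
  then show ?thesis
  proof cases
    case c
    interpret R: prob_space "return borel c" by (rule prob_space_return) simp
    have "integrable (return borel c) (\<lambda>t::real. t^2)"
      by (rule R.integrable_const_bound[where B="c^2"]) (auto simp: AE_return)
    then have "integrable (distr M borel X) (\<lambda>t::real. t^2)" using c by simp
    then show ?thesis by (subst (asm) integrable_distr_eq) auto
  next
    case n
    have eq: "(\<lambda>t. normal_density m s t * t^2) = (\<lambda>t. normal_density m s t * (t-m)^2 + 2*m*(normal_density m s t * (t-m)^1) + m^2 * normal_density m s t)"
      by (auto simp: fun_eq_iff algebra_simps power2_eq_square)
    have "integrable lborel (\<lambda>t. normal_density m s t * t^2)"
      unfolding eq by (intro Bochner_Integration.integrable_add Bochner_Integration.integrable_mult_right integrable_normal_moment integrable_normal_density) (simp_all add: n(1))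
    then show ?thesis using distributed_integrable[OF n(2), of "\<lambda>t. t^2"] by simp
  qed
qed

lemma bounded_linear_vsing: "bounded_linear (\<lambda>v::'b::real_normed_vector. (\<chi> j::'n::finite. if j = i then v else 0))"
proof (rule bounded_linear_intro[where K=1])
  fix x y :: 'b and r :: real
  show "(\<chi> j. if j = i then x + y else 0) = (\<chi> j. if j = i then x else 0) + (\<chi> j. if j = i then y else 0)"
    by (simp add: vec_eq_iff)
  show "(\<chi> j. if j = i then r *\<^sub>R x else 0) = r *\<^sub>R (\<chi> j. if j = i then x else 0)"
    by (simp add: vec_eq_iff)
  have "norm (\<chi> j::'n. if j = i then x else 0) \<le> (\<Sum>j\<in>UNIV. norm ((\<chi> j::'n. if j = i then x else 0) $ j))"
    unfolding norm_vec_def by (rule L2_set_le_sum) simp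
  also have "\<dots> = (\<Sum>j\<in>UNIV. if j = i then norm x else 0)"
    by (rule sum.cong) auto
  also have "\<dots> = norm x" by simp
  finally show "norm (\<chi> j::'n. if j = i then x else 0) \<le> norm x * 1" by simp
qed

lemma vec_lambda_sum: "(\<chi> i::'n::finite. f i) = (\<Sum>i\<in>UNIV. (\<chi> j. if j = i then f i else (0::'b::real_normed_vector)))"
  by (simp add: vec_eq_iff if_distrib)

lemma integrable_vec_lambda:
  fixes f :: "'n::finite \<Rightarrow> 'a \<Rightarrow> 'b::euclidean_space"
  assumes "\<And>i. integrable M (f i)"
  shows "integrable M (\<lambda>x. \<chi> i. f i x)"
  apply (subst vec_lambda_sum)
  apply (rule Bochner_Integration.integrable_sum)
  apply (rule integrable_bounded_linear[OF bounded_linear_vsing])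
  by (rule assms)

lemma integral_vec_lambda:
  fixes f :: "'n::finite \<Rightarrow> 'a \<Rightarrow> 'b::euclidean_space"
  assumes "\<And>i. integrable M (f i)"
  shows "integral\<^sup>L M (\<lambda>x. \<chi> i. f i x) = (\<chi> i. integral\<^sup>L M (f i))"
proof -
  have int: "integrable M (\<lambda>x. \<chi> i. f i x)" by (rule integrable_vec_lambda[OF assms])
  have "integral\<^sup>L M (\<lambda>x. (\<chi> i. f i x) $ k) = (integral\<^sup>L M (\<lambda>x. \<chi> i. f i x)) $ k" for k
    by (rule integral_bounded_linear[OF bounded_linear_vec_nth int])
  then show ?thesis by (simp add: vec_eq_iff)
qed

lemma Eneg_l: "(\<integral>x. ((-u) \<bullet> f x) * ((v::quat) \<bullet> f x) \<partial>M) = - (\<integral>x. (u \<bullet> f x) * (v \<bullet> f x) \<partial>M)"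
  by (simp add: inner_minus_left)
lemma Eneg_r: "(\<integral>x. (u \<bullet> f x) * ((-v::quat) \<bullet> f x) \<partial>M) = - (\<integral>x. (u \<bullet> f x) * (v \<bullet> f x) \<partial>M)"
  by (simp add: inner_minus_left)
lemma Ecomm: "(\<integral>x. (u \<bullet> f x) * ((v::quat) \<bullet> f x) \<partial>M) = (\<integral>x. (v \<bullet> f x) * (u \<bullet> f x) \<partial>M)"
  by (simp add: mult.commute)
lemma ent_gen: assumes "pure_unit \<mu>" "w$i = cm \<mu> a b" "w$j = cm \<mu> c d"
  shows "qmul (w$i) (qcnj (w$j)) = cm \<mu> (a*c + b*d) (b*c - a*d)"
  unfolding assms(2,3) qcnj_cm[OF assms(1)] qmul_cm[OF assms(1)] by (simp add: algebra_simps)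
lemma cm_eqI: "a = c \<Longrightarrow> b = d \<Longrightarrow> cm \<mu> a b = cm \<mu> c d" by simp
lemma mat_eq_iff: "(A::'a^'n^'m) = B \<longleftrightarrow> (\<forall>i j. A $ i $ j = B $ i $ j)"
  by (simp add: vec_eq_iff)
lemma cm_eq0I: "a = 0 \<Longrightarrow> b = 0 \<Longrightarrow> cm \<mu> a b = 0" by (simp add: cm_def)
lemma cm_zero: "cm \<mu> 0 0 = 0" by (simp add: cm_def)
lemma cm_one: "s *\<^sub>R qone = cm \<mu> s 0" by (simp add: cm_def)
lemma integrable_cm: "integrable M f \<Longrightarrow> integrable M g \<Longrightarrow> integrable M (\<lambda>x. cm \<mu> (f x) (g x))"
  unfolding cm_def by simp
lemma integral_cm: "integrable M f \<Longrightarrow> integrable M g \<Longrightarrow> integral\<^sup>L M (\<lambda>x. cm \<mu> (f x) (g x)) = cm \<mu> (integral\<^sup>L M f) (integral\<^sup>L M g)"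
  unfolding cm_def by simp

theorem mainTheorem5:
  fixes M :: "'a measure" and \<mu>1 \<mu>2 :: quat and z1 z2 q :: "'a \<Rightarrow> quat"
  assumes "prob_space M"
    and "pure_unit \<mu>1" and "pure_unit \<mu>2" and "\<mu>1 \<bullet> \<mu>2 = 0"
    and "z1 \<in> borel_measurable M" and "z2 \<in> borel_measurable M"
    and "\<And>x. x \<in> space M \<Longrightarrow> z1 x \<in> Cmu \<mu>1 \<and> z2 x \<in> Cmu \<mu>1"
    and "\<And>x. x \<in> space M \<Longrightarrow> q x = z1 x + qmul (z2 x) \<mu>2"
    and "quat_gaussian M q"
    and "integral\<^sup>L M q = 0"
    and "distr M borel q = distr M borel (\<lambda>x. qmul (q x) \<mu>1)"
  shows "(let qC = (\<lambda>x. vector [z1 x, qcnj (z1 x), z2 x, qcnj (z2 x)] :: quat ^ 4);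
              \<sigma>2 = (integral\<^sup>L M (\<lambda>x. (norm (z1 x))\<^sup>2)) *\<^sub>R qone;
              \<zeta>2 = (integral\<^sup>L M (\<lambda>x. (norm (z2 x))\<^sup>2)) *\<^sub>R qone;
              \<omega> = integral\<^sup>L M (\<lambda>x. qmul (z1 x) (z2 x))
          in integral\<^sup>L M (\<lambda>x. (\<chi> i j. qmul (qC x $ i) (qcnj (qC x $ j))) :: quat ^ 4 ^ 4)
             = vector [vector [\<sigma>2, 0, 0, \<omega>],
                       vector [0, \<sigma>2, qcnj \<omega>, 0],
                       vector [0, \<omega>, \<zeta>2, 0],
                       vector [qcnj \<omega>, 0, 0, \<zeta>2]])"
proof -
  interpret P: prob_space M by fact
  interpret B: qbasis \<mu>1 \<mu>2 using assms(2-4) by unfold_locales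
  have qmeas[measurable]: "q \<in> borel_measurable M" using assms(9) by (simp add: quat_gaussian_def)
  define A where "A = (\<lambda>x. qone \<bullet> q x)"
  define Bv where "Bv = (\<lambda>x. \<mu>1 \<bullet> q x)"
  define C where "C = (\<lambda>x. \<mu>2 \<bullet> q x)"
  define D where "D = (\<lambda>x. B.m3 \<bullet> q x)"
  have z1e0: "z1 x = cm \<mu>1 (z1 x \<bullet> qone) (z1 x \<bullet> \<mu>1)" if "x \<in> space M" for x
    using assms(7)[OF that] B.Cmu_cm by blast
  have z2e0: "z2 x = cm \<mu>1 (z2 x \<bullet> qone) (z2 x \<bullet> \<mu>1)" if "x \<in> space M" for x
    using assms(7)[OF that] B.Cmu_cm by blast
  have qe: "q x = B.Bq (z1 x \<bullet> qone) (z1 x \<bullet> \<mu>1) (z2 x \<bullet> qone) (z2 x \<bullet> \<mu>1)" if "x \<in> space M" for x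
    using assms(8)[OF that] z1e0[OF that] z2e0[OF that] B.qmul_cm_m2 B.cm_Bq by metis
  have z1e: "z1 x = cm \<mu>1 (A x) (Bv x)" and z2e: "z2 x = cm \<mu>1 (C x) (D x)" if "x \<in> space M" for x
    using z1e0[OF that] z2e0[OF that] qe[OF that] B.inner_Bq unfolding A_def Bv_def C_def D_def by simp_all
  have qm: "qmul (q x) \<mu>1 = B.Bq (- Bv x) (A x) (D x) (- C x)" if "x \<in> space M" for x
    using qe[OF that] B.qmul_Bq B.inner_Bq unfolding A_def Bv_def C_def D_def by simp
  have qmmeas: "(\<lambda>x. qmul (q x) \<mu>1) \<in> borel_measurable M"
    apply (subst measurable_cong[where g="\<lambda>x. B.Bq (- Bv x) (A x) (D x) (- C x)"])
    using qm apply simp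
    unfolding B.Bq_def A_def Bv_def C_def D_def by measurable
  have sym: "(\<integral>x. G (q x) \<partial>M) = (\<integral>x. G (qmul (q x) \<mu>1) \<partial>M)" if "G \<in> borel_measurable borel" for G :: "quat \<Rightarrow> real"
    using integral_distr[OF qmeas that] integral_distr[OF qmmeas that] assms(11) by simp
  have sq: "integrable M (\<lambda>x. (w \<bullet> q x)^2)" for w
    using gaussian_sq_integrable[OF assms(1)] assms(9) by (auto simp: quat_gaussian_def)
  have ip[simp]: "integrable M (\<lambda>x. (u \<bullet> q x) * (v \<bullet> q x))" for u v
  proof -
    have "(\<lambda>x. (u \<bullet> q x) * (v \<bullet> q x)) = (\<lambda>x. (((u+v) \<bullet> q x)^2 - ((u-v) \<bullet> q x)^2)/4)"
      by (auto simp: fun_eq_iff inner_add_left inner_diff_left power2_eq_square algebra_simps)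
    then show ?thesis using sq by simp
  qed
  let ?E = "\<lambda>u v. (\<integral>x. (u \<bullet> q x) * (v \<bullet> q x) \<partial>M)"
  have symE: "?E u v = (\<integral>x. (u \<bullet> B.Bq (- Bv x) (A x) (D x) (- C x)) * (v \<bullet> B.Bq (- Bv x) (A x) (D x) (- C x)) \<partial>M)" for u v
  proof -
    have "?E u v = (\<integral>x. (u \<bullet> qmul (q x) \<mu>1) * (v \<bullet> qmul (q x) \<mu>1) \<partial>M)"
      by (rule sym) measurable
    also have "\<dots> = (\<integral>x. (u \<bullet> B.Bq (- Bv x) (A x) (D x) (- C x)) * (v \<bullet> B.Bq (- Bv x) (A x) (D x) (- C x)) \<partial>M)"
      by (rule Bochner_Integration.integral_cong) (auto simp: qm)
    finally show ?thesis .
  qed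
  note Eneg = Eneg_l[where f=q and M=M] Eneg_r[where f=q and M=M]
  note cms = Ecomm[where f=q and M=M and u=qone and v=\<mu>1] Ecomm[where f=q and M=M and u=qone and v=\<mu>2]
    Ecomm[where f=q and M=M and u=qone and v=B.m3] Ecomm[where f=q and M=M and u=\<mu>1 and v=\<mu>2]
    Ecomm[where f=q and M=M and u=\<mu>1 and v=B.m3] Ecomm[where f=q and M=M and u=\<mu>2 and v=B.m3]
  have m1: "?E qone qone = ?E \<mu>1 \<mu>1" "?E qone \<mu>1 = - ?E qone \<mu>1" "?E \<mu>2 \<mu>2 = ?E B.m3 B.m3"
    "?E \<mu>2 B.m3 = - ?E \<mu>2 B.m3" "?E qone \<mu>2 = - ?E \<mu>1 B.m3" "?E \<mu>1 \<mu>2 = ?E qone B.m3"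
    using symE[of qone qone] symE[of qone \<mu>1] symE[of \<mu>2 \<mu>2] symE[of \<mu>2 B.m3] symE[of qone \<mu>2] symE[of \<mu>1 \<mu>2]
    by (simp_all add: B.inner_Bq A_def Bv_def C_def D_def cms)
  define ua :: "quat^4" where "ua = vector [qone, qone, \<mu>2, \<mu>2]"
  define ub :: "quat^4" where "ub = vector [\<mu>1, -\<mu>1, B.m3, -B.m3]"
  define qCv where "qCv = (\<lambda>x. vector [z1 x, qcnj (z1 x), z2 x, qcnj (z2 x)] :: quat^4)"
  have qCe: "qCv x $ i = cm \<mu>1 (ua$i \<bullet> q x) (ub$i \<bullet> q x)"
    if "x \<in> space M" for x i
  proof -
    have "\<forall>i. qCv x $ i = cm \<mu>1 (ua$i \<bullet> q x) (ub$i \<bullet> q x)"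
      unfolding qCv_def
      by (simp add: forall_4 ua_def ub_def z1e[OF that] z2e[OF that] qcnj_cm[OF assms(2)] A_def Bv_def C_def D_def inner_minus_left)
    then show ?thesis by blast
  qed
  define Fe where "Fe = (\<lambda>i j x. qmul (qCv x $ i) (qcnj (qCv x $ j)))"
  define Ge where "Ge = (\<lambda>i j x. cm \<mu>1 ((ua$i \<bullet> q x)*(ua$j \<bullet> q x) + (ub$i \<bullet> q x)*(ub$j \<bullet> q x)) ((ub$i \<bullet> q x)*(ua$j \<bullet> q x) - (ua$i \<bullet> q x)*(ub$j \<bullet> q x)))"
  have FG: "Fe i j x = Ge i j x" if "x \<in> space M" for x i j
    unfolding Fe_def Ge_def by (rule ent_gen[OF assms(2) qCe[OF that] qCe[OF that]])
  have int_Ge: "integrable M (Ge i j)" for i j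
    unfolding Ge_def by (intro integrable_cm Bochner_Integration.integrable_add Bochner_Integration.integrable_diff ip)
  have int_Fe: "integrable M (Fe i j)" for i j
  proof -
    have "integrable M (Fe i j) \<longleftrightarrow> integrable M (Ge i j)"
      by (rule Bochner_Integration.integrable_cong) (auto simp: FG)
    with int_Ge show ?thesis by simp
  qed
  have integral_Fe: "integral\<^sup>L M (Fe i j) = cm \<mu>1 (?E (ua$i) (ua$j) + ?E (ub$i) (ub$j)) (?E (ub$i) (ua$j) - ?E (ua$i) (ub$j))" for i j
  proof -
    have "integral\<^sup>L M (Fe i j) = integral\<^sup>L M (Ge i j)"
      by (rule Bochner_Integration.integral_cong) (auto simp: FG)
    also have "\<dots> = cm \<mu>1 (?E (ua$i) (ua$j) + ?E (ub$i) (ub$j)) (?E (ub$i) (ua$j) - ?E (ua$i) (ub$j))"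
      unfolding Ge_def by (subst integral_cm) (auto intro!: Bochner_Integration.integrable_add Bochner_Integration.integrable_diff)
    finally show ?thesis .
  qed
  have sig1: "(\<integral>x. (norm (z1 x))^2 \<partial>M) = ?E qone qone + ?E \<mu>1 \<mu>1"
    apply (subst Bochner_Integration.integral_cong[OF refl, where g="\<lambda>x. (qone \<bullet> q x) * (qone \<bullet> q x) + (\<mu>1 \<bullet> q x) * (\<mu>1 \<bullet> q x)"])
    by (simp_all add: z1e norm_cm2[OF assms(2)] A_def Bv_def power2_eq_square)
  have sig2: "(\<integral>x. (norm (z2 x))^2 \<partial>M) = ?E \<mu>2 \<mu>2 + ?E B.m3 B.m3"
    apply (subst Bochner_Integration.integral_cong[OF refl, where g="\<lambda>x. (\<mu>2 \<bullet> q x) * (\<mu>2 \<bullet> q x) + (B.m3 \<bullet> q x) * (B.m3 \<bullet> q x)"])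
    by (simp_all add: z2e norm_cm2[OF assms(2)] C_def D_def power2_eq_square)
  have om: "(\<integral>x. qmul (z1 x) (z2 x) \<partial>M) = cm \<mu>1 (?E qone \<mu>2 - ?E \<mu>1 B.m3) (?E qone B.m3 + ?E \<mu>1 \<mu>2)"
    apply (subst Bochner_Integration.integral_cong[OF refl, where g="\<lambda>x. cm \<mu>1 ((qone \<bullet> q x) * (\<mu>2 \<bullet> q x) - (\<mu>1 \<bullet> q x) * (B.m3 \<bullet> q x)) ((qone \<bullet> q x) * (B.m3 \<bullet> q x) + (\<mu>1 \<bullet> q x) * (\<mu>2 \<bullet> q x))"])
     apply (simp add: z1e z2e qmul_cm[OF assms(2)] A_def Bv_def C_def D_def)
    apply (subst integral_cm)
    by (auto intro!: Bochner_Integration.integrable_add Bochner_Integration.integrable_diff)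
  have L: "integral\<^sup>L M (\<lambda>x. (\<chi> i j. Fe i j x) :: quat^4^4) = (\<chi> i j. integral\<^sup>L M (Fe i j))"
    apply (subst integral_vec_lambda)
     apply (rule integrable_vec_lambda, rule int_Fe)
    apply (subst integral_vec_lambda)
     apply (rule int_Fe)
    by (rule refl)
  have R: "(\<chi> i j. integral\<^sup>L M (Fe i j)) = (vector [vector [((\<integral>x. (norm (z1 x))\<^sup>2 \<partial>M) *\<^sub>R qone), 0, 0, (\<integral>x. qmul (z1 x) (z2 x) \<partial>M)],
                       vector [0, ((\<integral>x. (norm (z1 x))\<^sup>2 \<partial>M) *\<^sub>R qone), qcnj (\<integral>x. qmul (z1 x) (z2 x) \<partial>M), 0],
                       vector [0, (\<integral>x. qmul (z1 x) (z2 x) \<partial>M), ((\<integral>x. (norm (z2 x))\<^sup>2 \<partial>M) *\<^sub>R qone), 0],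
                       vector [qcnj (\<integral>x. qmul (z1 x) (z2 x) \<partial>M), 0, 0, ((\<integral>x. (norm (z2 x))\<^sup>2 \<partial>M) *\<^sub>R qone)]] :: quat^4^4)"
    unfolding integral_Fe sig1 sig2 om
    apply (simp only: mat_eq_iff)
    apply (simp add: forall_4 ua_def ub_def Eneg cm_one[of _ \<mu>1] qcnj_cm[OF assms(2)])
    apply (intro conjI cm_eqI cm_eq0I)
    using m1 cms by linarith+
  show ?thesis unfolding Let_def using trans[OF L R] unfolding Fe_def qCv_def .
qed

end
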